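(* Let $a,b,c\in\mathbb{R}$ with $c\neq 0$, and let $c_{1,2}=-\frac{2}{27}a^3+\frac13 ab\pm\frac{2}{27}\sqrt{(a^2-3b)^3}$ (defined when $b\le a^2/3$; upper sign for $c_1$). The cubic $x^3+ax^2+bx+c$ has three negative real roots (counted with multiplicity) if and only if $a>0$ and either (i) $0<b\le a^2/4$ and $0<c\le c_1$, or (ii) $a^2/4<b\le a^2/3$ and $0<c_2\le c\le c_1$. *)

theory Defs
  imports "HOL-Computational_Algebra.Polynomial"
begin

definition cubic_c1 :: "real \<Rightarrow> real \<Rightarrow> real" where
  "cubic_c1 a b = - 2/27 * a^3 + 1/3 * a * b + 2/27 * sqrt ((a^2 - 3*b)^3)"

definition cubic_c2 :: "real \<Rightarrow> real \<Rightarrow> real" where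
  "cubic_c2 a b = - 2/27 * a^3 + 1/3 * a * b - 2/27 * sqrt ((a^2 - 3*b)^3)"

definition three_neg_roots :: "real poly \<Rightarrow> bool" where
  "three_neg_roots p \<longleftrightarrow> (\<exists>r1 r2 r3. r1 < 0 \<and> r2 < 0 \<and> r3 < 0 \<and>
      p = [:-r1, 1:] * [:-r2, 1:] * [:-r3, 1:])"

end

theory Submission
  imports Defs
begin

definition disc3 :: "real \<Rightarrow> real \<Rightarrow> real \<Rightarrow> real" where
  "disc3 a b c = 18*a*b*c - 4*a^3*c + a^2*b^2 - 4*b^3 - 27*c^2"

lemma sqrt_cube: "(s::real) \<ge> 0 \<Longrightarrow> sqrt ((s^2)^3) = s^3"
proof -
  assume "s \<ge> 0"
  have "(s^2)^3 = (s^3)^2" by algebra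
  moreover have "sqrt ((s^3)^2) = \<bar>s^3\<bar>" by (rule real_sqrt_abs)
  ultimately show ?thesis using \<open>s \<ge> 0\<close> by simp
qed

lemma c12_s:
  fixes a b s :: real
  assumes "s \<ge> 0" "s^2 = a^2 - 3*b"
  shows "cubic_c1 a b = (-2*a^3 + 9*a*b + 2*s^3)/27"
    and "cubic_c2 a b = (-2*a^3 + 9*a*b - 2*s^3)/27"
proof -
  have "sqrt ((a^2 - 3*b)^3) = s^3" using sqrt_cube[OF assms(1)] assms(2) by simp
  thus "cubic_c1 a b = (-2*a^3 + 9*a*b + 2*s^3)/27"
    and "cubic_c2 a b = (-2*a^3 + 9*a*b - 2*s^3)/27"
    by (auto simp: cubic_c1_def cubic_c2_def field_simps)
qed

lemma disc_fact:
  fixes a b c s :: real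
  assumes "s^2 = a^2 - 3*b"
  shows "disc3 a b c = -27 * (c - (-2*a^3 + 9*a*b + 2*s^3)/27) * (c - (-2*a^3 + 9*a*b - 2*s^3)/27)"
proof -
  have b: "b = (a^2 - s^2)/3" using assms by simp
  show ?thesis unfolding disc3_def b by (simp add: field_simps) algebra
qed

lemma c2_sign:
  fixes a b s :: real
  assumes "s \<ge> 0" "s^2 = a^2 - 3*b" "a > 0"
  shows "(-2*a^3 + 9*a*b - 2*s^3 \<le> 0) \<longleftrightarrow> b \<le> a^2/4"
proof -
  have b: "b = (a^2 - s^2)/3" using assms by simp
  have e: "-2*a^3 + 9*a*b - 2*s^3 = (a - 2*s)*(a+s)^2" unfolding b
    by (simp add: field_simps) algebra
  have pos: "(a+s)^2 > 0" using assms by simp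
  have "(a - 2*s)*(a+s)^2 \<le> 0 \<longleftrightarrow> a \<le> 2*s"
    using pos by (simp add: mult_le_0_iff)
  also have "\<dots> \<longleftrightarrow> a^2 \<le> (2*s)^2"
    using power2_le_iff_abs_le[of "2*s" a] assms by (metis abs_of_pos mult_nonneg_nonneg zero_le_numeral)
  also have "\<dots> \<longleftrightarrow> b \<le> a^2/4" using assms(2) by (auto simp: power_mult_distrib)
  finally show ?thesis using e by simp
qed

lemma prod3: "[:-r1,1:]*[:-r2,1:]*[:-r3,1:] = [: -r1*r2*r3, r1*r2+r1*r3+r2*r3, -(r1+r2+r3), 1::real:]"
  by (simp add: algebra_simps)

lemma neg_root:
  fixes a b c x :: real
  assumes "a > 0" "b > 0" "c > 0" "poly [:c,b,a,1:] x = 0"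
  shows "x < 0"
proof (rule ccontr)
  assume "\<not> x < 0"
  hence "x \<ge> 0" by simp
  hence "x*(b + x*(a+x)) \<ge> 0" using assms by simp
  thus False using assms by simp
qed

lemma le_between:
  fixes x p q :: real
  assumes "(x - p)*(x - q) \<le> 0" "q \<le> p"
  shows "q \<le> x \<and> x \<le> p"
  using assms by (smt (verit) mult_le_0_iff)

lemma char_main:
  fixes a b c :: real
  shows "three_neg_roots [:c, b, a, 1:] \<longleftrightarrow>
    (a > 0 \<and> b > 0 \<and> c > 0 \<and> b \<le> a^2/3 \<and> cubic_c2 a b \<le> c \<and> c \<le> cubic_c1 a b)"
proof
  assume "three_neg_roots [:c, b, a, 1:]"
  then obtain r1 r2 r3 where r: "r1 < 0" "r2 < 0" "r3 < 0"
    and eq: "[:c, b, a, 1:] = [:-r1, 1:] * [:-r2, 1:] * [:-r3, 1:]"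
    unfolding three_neg_roots_def by blast
  have co: "c = -r1*r2*r3" "b = r1*r2+r1*r3+r2*r3" "a = -(r1+r2+r3)"
    using eq unfolding prod3 by simp_all
  have ap: "a > 0" using co r by simp
  have bp: "b > 0" using co r by (simp add: mult_neg_neg add_pos_pos)
  have "r1*r2*r3 < 0" using r by (metis mult_neg_neg mult_pos_neg)
  hence cp: "c > 0" using co by simp
  have "a^2 - 3*b = ((r1-r2)^2 + (r2-r3)^2 + (r1-r3)^2)/2"
    unfolding co by (simp add: field_simps) algebra
  hence D: "a^2 - 3*b \<ge> 0"
    by (metis add_nonneg_nonneg divide_nonneg_pos zero_le_power2 zero_less_numeral)
  hence b3: "b \<le> a^2/3" by simp
  define s where "s = sqrt (a^2 - 3*b)"
  have s0: "s \<ge> 0" and s2: "s^2 = a^2 - 3*b" using D by (simp_all add: s_def)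
  have "disc3 a b c = ((r1-r2)*(r2-r3)*(r1-r3))^2"
    unfolding disc3_def co by algebra
  hence "disc3 a b c \<ge> 0" by simp
  moreover have "disc3 a b c = -27 * ((c - cubic_c1 a b) * (c - cubic_c2 a b))"
    by (simp only: disc_fact[OF s2] c12_s[OF s0 s2] mult.assoc)
  ultimately have "(c - cubic_c1 a b) * (c - cubic_c2 a b) \<le> 0" by linarith
  moreover have "cubic_c1 a b - cubic_c2 a b = 4*s^3/27" using c12_s[OF s0 s2] by (simp add: field_simps)
  moreover have "4*s^3/27 \<ge> 0" using s0 by simp
  ultimately have "cubic_c2 a b \<le> cubic_c1 a b" by linarith
  moreover note \<open>(c - cubic_c1 a b) * (c - cubic_c2 a b) \<le> 0\<close>
  ultimately have "cubic_c2 a b \<le> c \<and> c \<le> cubic_c1 a b" using le_between by blast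
  thus "a > 0 \<and> b > 0 \<and> c > 0 \<and> b \<le> a^2/3 \<and> cubic_c2 a b \<le> c \<and> c \<le> cubic_c1 a b"
    using ap bp cp b3 by simp
next
  assume H: "a > 0 \<and> b > 0 \<and> c > 0 \<and> b \<le> a^2/3 \<and> cubic_c2 a b \<le> c \<and> c \<le> cubic_c1 a b"
  hence ap: "a > 0" and bp: "b > 0" and cp: "c > 0" and b3: "b \<le> a^2/3" by auto
  have D: "a^2 - 3*b \<ge> 0" using b3 by simp
  define s where "s = sqrt (a^2 - 3*b)"
  have s0: "s \<ge> 0" and s2: "s^2 = a^2 - 3*b" using D by (simp_all add: s_def)
  have "(c - cubic_c1 a b) * (c - cubic_c2 a b) \<le> 0"
    using H by (simp add: mult_le_0_iff)
  moreover have "disc3 a b c = -27 * ((c - cubic_c1 a b) * (c - cubic_c2 a b))"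
    by (simp only: disc_fact[OF s2] c12_s[OF s0 s2] mult.assoc)
  ultimately have disc: "disc3 a b c \<ge> 0" by linarith
  define M where "M = a + c + 1"
  have M1: "M \<ge> 1" using ap cp by (simp add: M_def)
  hence M2: "M^2 \<ge> 1" by (simp add: one_le_power)
  hence "M^2 * (c+1) \<ge> 1 * (c+1)" using cp by (intro mult_right_mono) auto
  moreover have "b*M > 0" using bp M1 by simp
  moreover have "poly [:c, b, a, 1:] (-M) = c - b*M - M^2*(c+1)"
    by (simp add: M_def algebra_simps power2_eq_square)
  ultimately have neg: "poly [:c, b, a, 1:] (-M) < 0" by simp
  have "poly [:c, b, a, 1:] 0 > 0" using cp by simp
  then obtain r where "poly [:c, b, a, 1:] r = 0"
    using poly_IVT_pos[of "-M" 0 "[:c, b, a, 1:]"] neg M1 by force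
  hence pr: "c + r*(b + r*(a + r)) = 0" by simp
  have rneg: "r < 0" using neg_root[OF ap bp cp] \<open>poly [:c, b, a, 1:] r = 0\<close> .
  define e where "e = a + r"
  define f where "f = b + r*(a+r)"
  have ae: "a = e - r" and bf: "b = f - r*e" and cf: "c = -r*f"
    using pr by (simp_all add: e_def f_def algebra_simps)
  have dq: "disc3 a b c = (e^2 - 4*f) * (r^2 + e*r + f)^2"
    unfolding disc3_def ae bf cf by algebra
  have ef: "e^2 - 4*f \<ge> 0"
  proof (cases "r^2 + e*r + f = 0")
    case True
    have "e^2 - 4*f = (2*r+e)^2 - 4*(r^2 + e*r + f)" by algebra
    thus ?thesis using True by simp
  next
    case False
    hence "(r^2 + e*r + f)^2 > 0" by simp
    thus ?thesis using disc dq by (simp add: zero_le_mult_iff)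
  qed
  define d where "d = sqrt (e^2 - 4*f)"
  have d2: "d^2 = e^2 - 4*f" using ef by (simp add: d_def)
  define t1 where "t1 = (-e + d)/2"
  define t2 where "t2 = (-e - d)/2"
  have ts: "t1 + t2 = -e" by (simp add: t1_def t2_def field_simps)
  have tp: "t1 * t2 = f" unfolding t1_def t2_def
    using d2 by (simp add: field_simps power2_eq_square)
  have feq: "[:c, b, a, 1:] = [:-r, 1:] * [:-t1, 1:] * [:-t2, 1:]"
    unfolding prod3 ae bf cf
  proof -
    have "r*t1 + r*t2 + t1*t2 = f - r*e" using ts tp by (simp add: distrib_left[symmetric])
    moreover have "-r*t1*t2 = -r*f" using tp by (simp add: algebra_simps)
    moreover have "-(r+t1+t2) = e - r" using ts by simp
    ultimately show "[:- r * f, f - r * e, e - r, 1:] = [:- r * t1 * t2, r * t1 + r * t2 + t1 * t2, - (r + t1 + t2), 1:]"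
      using tp ts by simp
  qed
  have "poly [:c, b, a, 1:] t1 = 0" "poly [:c, b, a, 1:] t2 = 0"
    by (simp_all only: feq poly_mult) simp_all
  hence "t1 < 0" "t2 < 0" using neg_root[OF ap bp cp] by auto
  thus "three_neg_roots [:c, b, a, 1:]"
    unfolding three_neg_roots_def using feq rneg by blast
qed

theorem mainTheorem6:
  fixes a b c :: real
  assumes "c \<noteq> 0"
  shows "three_neg_roots [:c, b, a, 1:] \<longleftrightarrow>
    (a > 0 \<and>
      ((0 < b \<and> b \<le> a^2/4 \<and> 0 < c \<and> c \<le> cubic_c1 a b) \<or>
       (a^2/4 < b \<and> b \<le> a^2/3 \<and> 0 < cubic_c2 a b \<and> cubic_c2 a b \<le> c \<and> c \<le> cubic_c1 a b)))"
proof -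
  have key: "(a > 0 \<and> b > 0 \<and> c > 0 \<and> b \<le> a^2/3 \<and> cubic_c2 a b \<le> c \<and> c \<le> cubic_c1 a b)
    \<longleftrightarrow> (a > 0 \<and>
      ((0 < b \<and> b \<le> a^2/4 \<and> 0 < c \<and> c \<le> cubic_c1 a b) \<or>
       (a^2/4 < b \<and> b \<le> a^2/3 \<and> 0 < cubic_c2 a b \<and> cubic_c2 a b \<le> c \<and> c \<le> cubic_c1 a b)))"
  proof (cases "a > 0 \<and> b \<le> a^2/3")
    case True
    hence ap: "a > 0" and D: "a^2 - 3*b \<ge> 0" by auto
    define s where "s = sqrt (a^2 - 3*b)"
    have s0: "s \<ge> 0" and s2: "s^2 = a^2 - 3*b" using D by (simp_all add: s_def)
    have "cubic_c2 a b \<le> 0 \<longleftrightarrow> (-2*a^3 + 9*a*b - 2*s^3 \<le> 0)"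
      using c12_s(2)[OF s0 s2] by auto
    hence c2: "cubic_c2 a b \<le> 0 \<longleftrightarrow> b \<le> a^2/4"
      using c2_sign[OF s0 s2 ap] by simp
    have "a^2/4 \<ge> 0" by simp
    thus ?thesis using c2 True by (smt (verit))
  next
    case False
    have "a^2/4 \<le> a^2/3" by simp
    thus ?thesis using False by auto
  qed
  show ?thesis using char_main key by simp
qed

end
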